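(* Consider robust dynamic pricing with horizon $T$, valuation $v^\star\in[0,1)$, and feedback corrupted in at most $C$ rounds, where $C$ is known to the learner. The meta-algorithm described in the context, with the commitment subroutine \textsc{CommitKnown}, guarantees \[ R_T\le \mathcal O(C+\log T), \] with a hidden constant independent of $T$, $C$, $v^\star$ and the adversary.
   Context: Robust dynamic pricing: there are $T$ rounds and an unknown valuation $v^\star\in[0,1)$. At each round $t$ the seller posts a price $p_t\in[0,1]$. The true sale indicator is $y_t=\mathbbm 1\{p_t\le v^\star\}$; the seller observes $\sigma_t\in\{0,1\}$, and at most $C$ rounds are corrupted: $|\{t\in[T]:\sigma_t\neq y_t\}|\le C$. The adversary decides whether to corrupt round $t$ based on the history and on the seller's distribution over $p_t$, but not on the realized $p_t$ (how it corrupts may depend on the realized price). Revenue is $r_t=p_t\,\mathbbm 1\{p_t\le v^\star\}$ and regret is $R_T=Tv^\star-\sum_{t=1}^T r_t$. $\log$ is base $2$. Meta-algorithm: let $D=\lceil\log_2 T\rceil$. Consider the complete binary tree of intervals of depth $D$ with root $[0,1)$, where each non-leaf node $[L,R)$ has children $[L,M)$ and $[M,R)$, $M=(L+R)/2$; the depth-$D$ nodes are the leaves (each of length at most $1/T$). The algorithm keeps a current node $I$, initially the root, and repeats until the horizon ends: if $I=[L,R)$ is not a leaf, it performs a safety check — post $L$ and observe $\sigma_L$, post $R$ and observe $\sigma_R$; the check fails if $\sigma_L=0$ or $\sigma_R=1$ (by convention the query at $L=0$ and the query at $R=1$ always count as passing). On failure $I$ becomes its parent; otherwise it posts $M$, observes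 $\sigma_M$, and $I$ becomes $[M,R)$ if $\sigma_M=1$ and $[L,M)$ if $\sigma_M=0$. If $I$ is a leaf, the commitment subroutine is run on $I$; if it returns FAIL, $I$ becomes its parent. \textsc{CommitKnown}: each leaf $\ell$ has a counter $s_\ell$, initialized to $0$ at the start of the horizon and shared across all calls. On leaf $\ell=[L,R)$ it repeats: if $s_\ell\le C$, post $L$ and observe $\sigma_L$, post $R$ and observe $\sigma_R$; if $\sigma_L=0$ or $\sigma_R=1$, return FAIL, else increase $s_\ell$ by $1$. If $s_\ell>C$, post $L$ (and continue doing so). *)

theory Defs
  imports Complex_Main
begin

text \<open>Robust dynamic pricing: the meta-algorithm with subroutine CommitKnown,
  modelled as a deterministic state machine that posts exactly one price per round.
  A node of the binary interval tree is encoded by its depth d and index k,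
  representing the interval [k/2^d, (k+1)/2^d).\<close>

datatype phase =
    ChkL            \<comment> \<open>safety check at an internal node: about to post L\<close>
  | ChkR bool       \<comment> \<open>about to post R; argument: whether the L-query passed\<close>
  | MidQ
  | LeafL           \<comment> \<open>CommitKnown, counter \<le> C: about to post L\<close>
  | LeafR bool      \<comment> \<open>CommitKnown: about to post R; argument: whether the L-query passed\<close>
  | Commit          \<comment> \<open>CommitKnown, counter > C: post L forever\<close>

record pstate =
  dep :: nat
  idx :: nat
  ph  :: phase
  cnt :: "nat \<Rightarrow> nat"   \<comment> \<open>counters s_l of the leaves (indexed by leaf index), shared across calls\<close>

definition tree_depth :: "nat \<Rightarrow> nat" where
  "tree_depth T = nat \<lceil>log 2 (real T)\<rceil>"

definition left_end :: "nat \<Rightarrow> nat \<Rightarrow> real" where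
  "left_end d k = real k / 2 ^ d"

definition right_end :: "nat \<Rightarrow> nat \<Rightarrow> real" where
  "right_end d k = real (Suc k) / 2 ^ d"

definition mid_pt :: "nat \<Rightarrow> nat \<Rightarrow> real" where
  "mid_pt d k = real (2 * k + 1) / 2 ^ Suc d"

definition start_phase :: "nat \<Rightarrow> nat \<Rightarrow> (nat \<Rightarrow> nat) \<Rightarrow> nat \<Rightarrow> nat \<Rightarrow> phase" where
  "start_phase D C s d k =
     (if d = D then (if s k \<le> C then LeafL else Commit) else ChkL)"

definition goto :: "nat \<Rightarrow> nat \<Rightarrow> pstate \<Rightarrow> nat \<Rightarrow> nat \<Rightarrow> pstate" where
  "goto D C st d k = st\<lparr>dep := d, idx := k, ph := start_phase D C (cnt st) d k\<rparr>"

definition goto_parent :: "nat \<Rightarrow> nat \<Rightarrow> pstate \<Rightarrow> pstate" where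
  "goto_parent D C st = goto D C st (dep st - 1) (idx st div 2)"

definition posted_price :: "pstate \<Rightarrow> real" where
  "posted_price st = (case ph st of
      ChkL \<Rightarrow> left_end (dep st) (idx st)
    | ChkR _ \<Rightarrow> right_end (dep st) (idx st)
    | MidQ \<Rightarrow> mid_pt (dep st) (idx st)
    | LeafL \<Rightarrow> left_end (dep st) (idx st)
    | LeafR _ \<Rightarrow> right_end (dep st) (idx st)
    | Commit \<Rightarrow> left_end (dep st) (idx st))"

text \<open>Query at L passes if L = 0 or the observed bit is 1; query at R passes if R = 1 or
  the observed bit is 0.\<close>
definition passL :: "pstate \<Rightarrow> bool \<Rightarrow> bool" where
  "passL st \<sigma> = (idx st = 0 \<or> \<sigma>)"

definition passR :: "pstate \<Rightarrow> bool \<Rightarrow> bool" where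
  "passR st \<sigma> = (Suc (idx st) = 2 ^ dep st \<or> \<not> \<sigma>)"

definition alg_step :: "nat \<Rightarrow> nat \<Rightarrow> pstate \<Rightarrow> bool \<Rightarrow> pstate" where
  "alg_step D C st \<sigma> = (case ph st of
      ChkL \<Rightarrow> st\<lparr>ph := ChkR (passL st \<sigma>)\<rparr>
    | ChkR pl \<Rightarrow> (if pl \<and> passR st \<sigma> then st\<lparr>ph := MidQ\<rparr> else goto_parent D C st)
    | MidQ \<Rightarrow> (if \<sigma> then goto D C st (Suc (dep st)) (2 * idx st + 1)
                     else goto D C st (Suc (dep st)) (2 * idx st))
    | LeafL \<Rightarrow> st\<lparr>ph := LeafR (passL st \<sigma>)\<rparr>
    | LeafR pl \<Rightarrow> (if pl \<and> passR st \<sigma>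
                   then goto D C (st\<lparr>cnt := (cnt st)(idx st := Suc (cnt st (idx st)))\<rparr>)
                          (dep st) (idx st)
                   else goto_parent D C st)
    | Commit \<Rightarrow> st)"

definition init_state :: "nat \<Rightarrow> nat \<Rightarrow> pstate" where
  "init_state D C = \<lparr>dep = 0, idx = 0, ph = start_phase D C (\<lambda>_. 0) 0 0, cnt = (\<lambda>_. 0)\<rparr>"

text \<open>An adversary maps the history (list of posted prices and observed bits) and the
  current posted price to the observed bit. Since the algorithm is deterministic,
  knowing the seller's distribution over the price means knowing the price.\<close>
type_synonym adversary = "(real \<times> bool) list \<Rightarrow> real \<Rightarrow> bool"

text \<open>State and history at the beginning of round t (rounds numbered from 0).\<close>
fun run :: "nat \<Rightarrow> nat \<Rightarrow> adversary \<Rightarrow> nat \<Rightarrow> pstate \<times> (real \<times> bool) list" where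
  "run T C adv 0 = (init_state (tree_depth T) C, [])"
| "run T C adv (Suc t) =
     (let (st, h) = run T C adv t; p = posted_price st; \<sigma> = adv h p
      in (alg_step (tree_depth T) C st \<sigma>, h @ [(p, \<sigma>)]))"

definition price :: "nat \<Rightarrow> nat \<Rightarrow> adversary \<Rightarrow> nat \<Rightarrow> real" where
  "price T C adv t = posted_price (fst (run T C adv t))"

definition observed :: "nat \<Rightarrow> nat \<Rightarrow> adversary \<Rightarrow> nat \<Rightarrow> bool" where
  "observed T C adv t = adv (snd (run T C adv t)) (price T C adv t)"

definition corrupted_rounds :: "nat \<Rightarrow> nat \<Rightarrow> adversary \<Rightarrow> real \<Rightarrow> nat set" where
  "corrupted_rounds T C adv v =
     {t. t < T \<and> observed T C adv t \<noteq> (price T C adv t \<le> v)}"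

definition regret :: "nat \<Rightarrow> nat \<Rightarrow> adversary \<Rightarrow> real \<Rightarrow> real" where
  "regret T C adv v =
     real T * v - (\<Sum>t<T. price T C adv t * (if price T C adv t \<le> v then 1 else 0))"

end

theory Submission
  imports Defs
begin

definition good :: "real \<Rightarrow> nat \<Rightarrow> nat \<Rightarrow> bool" where
  "good v d k \<longleftrightarrow> left_end d k \<le> v \<and> v < right_end d k"

fun bads :: "real \<Rightarrow> nat \<Rightarrow> nat \<Rightarrow> nat" where
  "bads v 0 k = 0"
| "bads v (Suc d) k = bads v d (k div 2) + (if good v (Suc d) k then 0 else 1)"

definition Phi :: "nat \<Rightarrow> real \<Rightarrow> nat \<Rightarrow> nat \<Rightarrow> nat" where
  "Phi D v d k = (D - d) + 2 * bads v d k"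

definition hL :: "real \<Rightarrow> pstate \<Rightarrow> bool" where
  "hL v st = passL st (left_end (dep st) (idx st) \<le> v)"

definition hR :: "real \<Rightarrow> pstate \<Rightarrow> bool" where
  "hR v st = passR st (right_end (dep st) (idx st) \<le> v)"

definition offR :: "real \<Rightarrow> pstate \<Rightarrow> bool \<Rightarrow> nat" where
  "offR v st b = (if b \<and> hR v st then (if good v (dep st) (idx st) then 1 else 7)
                  else (if good v (dep st) (idx st) then 6 else 1))"

definition off :: "real \<Rightarrow> pstate \<Rightarrow> nat" where
  "off v st = (case ph st of ChkL \<Rightarrow> 2 | ChkR b \<Rightarrow> offR v st b
     | MidQ \<Rightarrow> (if good v (dep st) (idx st) then 0 else 6)
     | LeafL \<Rightarrow> 2 | LeafR b \<Rightarrow> offR v st b | Commit \<Rightarrow> 0)"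

definition Psi :: "nat \<Rightarrow> nat \<Rightarrow> real \<Rightarrow> nat \<Rightarrow> pstate \<Rightarrow> nat" where
  "Psi D C v gl st = 3 * Phi D v (dep st) (idx st) + off v st + 2 * (Suc C - cnt st gl)"

definition inv :: "nat \<Rightarrow> nat \<Rightarrow> pstate \<Rightarrow> bool" where
  "inv D C st \<longleftrightarrow> dep st \<le> D \<and> idx st < 2 ^ dep st \<and>
    (case ph st of ChkL \<Rightarrow> dep st < D | ChkR _ \<Rightarrow> dep st < D | MidQ \<Rightarrow> dep st < D
     | LeafL \<Rightarrow> dep st = D \<and> cnt st (idx st) \<le> C
     | LeafR _ \<Rightarrow> dep st = D \<and> cnt st (idx st) \<le> C
     | Commit \<Rightarrow> dep st = D \<and> C < cnt st (idx st))"

definition extra :: "nat \<Rightarrow> real \<Rightarrow> pstate \<Rightarrow> nat \<Rightarrow> nat" where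
  "extra D v st k = (if dep st = D \<and> idx st = k \<and> ph st = LeafR True \<and> hR v st then 1 else 0)"

lemma good_child1: "good v d k \<Longrightarrow> good v (Suc d) (2*k+1) \<longleftrightarrow> mid_pt d k \<le> v"
  unfolding good_def left_end_def right_end_def mid_pt_def
  by (auto simp: field_simps)

lemma good_child0: "good v d k \<Longrightarrow> good v (Suc d) (2*k) \<longleftrightarrow> \<not> mid_pt d k \<le> v"
  unfolding good_def left_end_def right_end_def mid_pt_def
  by (auto simp: field_simps)

lemma good_unique: "good v D k \<Longrightarrow> good v D k' \<Longrightarrow> k = k'"
proof -
  assume a: "good v D k" "good v D k'"
  have p: "(0::real) < 2^D" by simp
  from a have "real k < real k' + 1" "real k' < real k + 1"
    unfolding good_def left_end_def right_end_def
    by (auto simp: field_simps)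
  thus ?thesis by linarith
qed

lemma good_exists: "0 \<le> v \<Longrightarrow> \<exists>g. good v D g"
proof -
  assume v: "0 \<le> v"
  define g where "g = nat \<lfloor>v * 2^D\<rfloor>"
  have "real g = of_int \<lfloor>v * 2^D\<rfloor>" using v unfolding g_def by simp
  hence "real g \<le> v * 2^D" "v * 2^D < real g + 1" by linarith+
  hence "good v D g" unfolding good_def left_end_def right_end_def
    by (auto simp: field_simps)
  thus ?thesis by blast
qed

lemma good_root: "0 \<le> v \<Longrightarrow> v < 1 \<Longrightarrow> good v 0 0"
  unfolding good_def left_end_def right_end_def by simp

lemma good_iff_h: "0 \<le> v \<Longrightarrow> v < 1 \<Longrightarrow> good v (dep st) (idx st) \<longleftrightarrow> hL v st \<and> hR v st"
proof -
  assume v: "0 \<le> v" "v < 1"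
  have e: "Suc (idx st) = 2 ^ dep st \<Longrightarrow> right_end (dep st) (idx st) = 1"
  proof -
    assume "Suc (idx st) = 2 ^ dep st"
    hence "real (Suc (idx st)) = 2 ^ dep st" by (metis of_nat_numeral of_nat_power)
    thus ?thesis unfolding right_end_def by simp
  qed
  show ?thesis
    unfolding good_def hL_def hR_def passL_def passR_def
    using e v by (auto simp: left_end_def)
qed

lemma Phi_child_le: "d < D \<Longrightarrow> Phi D v (Suc d) k \<le> Phi D v d (k div 2) + 1"
  unfolding Phi_def by simp arith

lemma Phi_child_good: "d < D \<Longrightarrow> good v (Suc d) k \<Longrightarrow> Phi D v (Suc d) k + 1 = Phi D v d (k div 2)"
  unfolding Phi_def by simp

lemma Phi_par_le: "Suc d \<le> D \<Longrightarrow> Phi D v d (k div 2) \<le> Phi D v (Suc d) k + 1"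
  unfolding Phi_def by simp

lemma Phi_par_bad: "Suc d \<le> D \<Longrightarrow> \<not> good v (Suc d) k \<Longrightarrow> Phi D v d (k div 2) + 1 = Phi D v (Suc d) k"
  unfolding Phi_def by simp

lemma goto_simps[simp]: "dep (goto D C st d k) = d" "idx (goto D C st d k) = k"
  "cnt (goto D C st d k) = cnt st" "ph (goto D C st d k) = start_phase D C (cnt st) d k"
  by (simp_all add: goto_def)

lemma off_goto: "off v (goto D C st d k) \<le> 2"
  by (simp add: off_def start_phase_def)

lemma psi_goto: "Psi D C v gl (goto D C st d k) \<le> 3 * Phi D v d k + 2 + 2*(Suc C - cnt st gl)"
  using off_goto[of v D C st d k] by (simp add: Psi_def)

lemma par_le: "dep st \<le> D \<Longrightarrow> idx st < 2^dep st \<Longrightarrow>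
   Phi D v (dep st - 1) (idx st div 2) \<le> Phi D v (dep st) (idx st) + 1"
  using Phi_par_le[of "dep st - 1" D v "idx st"] by (cases "dep st") auto

lemma par_bad: "dep st \<le> D \<Longrightarrow> idx st < 2^dep st \<Longrightarrow> 0 \<le> v \<Longrightarrow> v < 1 \<Longrightarrow>
   \<not> good v (dep st) (idx st) \<Longrightarrow> Phi D v (dep st - 1) (idx st div 2) + 1 = Phi D v (dep st) (idx st)"
  using Phi_par_bad[of "dep st - 1" D v "idx st"] by (cases "dep st") (auto simp: good_root)

lemma psi_parent:
  assumes "dep st \<le> D" "idx st < 2^dep st" "0 \<le> v" "v < 1"
  shows "Psi D C v gl (goto_parent D C st) \<le> 3 * Phi D v (dep st) (idx st) + 5 + 2*(Suc C - cnt st gl)"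
    and "\<not> good v (dep st) (idx st) \<Longrightarrow> Psi D C v gl (goto_parent D C st) + 1 \<le> 3 * Phi D v (dep st) (idx st) + 2*(Suc C - cnt st gl)"
proof -
  have a: "Psi D C v gl (goto_parent D C st) \<le> 3 * Phi D v (dep st - 1) (idx st div 2) + 2 + 2*(Suc C - cnt st gl)"
    unfolding goto_parent_def by (rule psi_goto)
  show "Psi D C v gl (goto_parent D C st) \<le> 3 * Phi D v (dep st) (idx st) + 5 + 2*(Suc C - cnt st gl)"
    using a par_le[OF assms(1,2), of v] by linarith
  assume "\<not> good v (dep st) (idx st)"
  then show "Psi D C v gl (goto_parent D C st) + 1 \<le> 3 * Phi D v (dep st) (idx st) + 2*(Suc C - cnt st gl)"
    using a par_bad[OF assms] by linarith
qed

lemma idx_par: "(k::nat) < 2 ^ d \<Longrightarrow> k div 2 < 2 ^ (d - 1)"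
  by (cases d) auto

lemma inv_goto: "d \<le> D \<Longrightarrow> k < 2^d \<Longrightarrow> inv D C (goto D C st d k)"
  by (auto simp: inv_def start_phase_def)

lemma inv_step: assumes "inv D C st" shows "inv D C (alg_step D C st \<sigma>)"
proof -
  have i: "dep st \<le> D" "idx st < 2^dep st" using assms by (auto simp: inv_def)
  have par: "inv D C (goto_parent D C st)" unfolding goto_parent_def
    using i idx_par by (intro inv_goto) auto
  show ?thesis
  proof (cases "ph st")
    case MidQ
    then have "dep st < D" using assms by (auto simp: inv_def)
    then show ?thesis using MidQ i by (auto simp: alg_step_def intro!: inv_goto)
  next
    case (LeafR x)
    then show ?thesis using assms par i by (auto simp: alg_step_def inv_def start_phase_def)
  qed (use assms par in \<open>auto simp: alg_step_def inv_def\<close>)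
qed

lemma offR_upd[simp]: "offR v (st\<lparr>ph := x\<rparr>) b = offR v st b"
  by (simp add: offR_def hR_def passR_def)

lemma offR_le: "offR v st b \<le> 7"
  by (simp add: offR_def)

lemma offR_honest: "0 \<le> v \<Longrightarrow> v < 1 \<Longrightarrow> offR v st (hL v st) = 1"
  using good_iff_h[of v st] by (auto simp: offR_def)

lemma psi_step:
  assumes inv: "inv D C st" and v: "0 \<le> v" "v < 1" and g: "good v D gl" and nc: "ph st \<noteq> Commit"
  shows "Psi D C v gl (alg_step D C st \<sigma>) \<le> Psi D C v gl st + 10"
    and "\<sigma> = (posted_price st \<le> v) \<Longrightarrow> Psi D C v gl (alg_step D C st \<sigma>) + 1 \<le> Psi D C v gl st"
proof -
  define P where "P = Phi D v (dep st) (idx st)"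
  define W where "W = 2 * (Suc C - cnt st gl)"
  have ps: "Psi D C v gl st = 3 * P + off v st + W" by (simp add: Psi_def P_def W_def)
  have i: "dep st \<le> D" "idx st < 2^dep st" using inv by (auto simp: inv_def)
  note pp = psi_parent[OF i v, of C gl, folded P_def W_def]
  have "Psi D C v gl (alg_step D C st \<sigma>) \<le> Psi D C v gl st + 10 \<and>
        (\<sigma> = (posted_price st \<le> v) \<longrightarrow> Psi D C v gl (alg_step D C st \<sigma>) + 1 \<le> Psi D C v gl st)"
  proof (cases "ph st")
    case ChkL
    have e: "Psi D C v gl (alg_step D C st \<sigma>) = 3 * P + offR v st (passL st \<sigma>) + W"
      using ChkL by (simp add: alg_step_def Psi_def P_def W_def off_def)
    show ?thesis using ChkL offR_le[of v st "passL st \<sigma>"] offR_honest[OF v, of st]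
      unfolding e ps by (auto simp: off_def posted_price_def hL_def)
  next
    case (LeafL)
    have e: "Psi D C v gl (alg_step D C st \<sigma>) = 3 * P + offR v st (passL st \<sigma>) + W"
      using LeafL by (simp add: alg_step_def Psi_def P_def W_def off_def)
    show ?thesis using LeafL offR_le[of v st "passL st \<sigma>"] offR_honest[OF v, of st]
      unfolding e ps by (auto simp: off_def posted_price_def hL_def)
  next
    case Commit
    then show ?thesis using nc by simp
  next
    case (ChkR pl)
    show ?thesis
    proof (cases "pl \<and> passR st \<sigma>")
      case True
      have e: "Psi D C v gl (alg_step D C st \<sigma>) = 3 * P + (if good v (dep st) (idx st) then 0 else 6) + W"
        using ChkR True by (simp add: alg_step_def Psi_def P_def W_def off_def)
      show ?thesis unfolding e ps using ChkR True
        by (cases \<sigma>; auto simp: off_def offR_def posted_price_def hR_def)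
    next
      case False
      have e: "alg_step D C st \<sigma> = goto_parent D C st"
        using ChkR False by (auto simp: alg_step_def)
      show ?thesis unfolding e ps using ChkR False pp
        by (auto simp: off_def offR_def posted_price_def hR_def)
    qed
  next
    case (LeafR pl)
    have dD: "dep st = D" and cC: "cnt st (idx st) \<le> C" using inv LeafR by (auto simp: inv_def)
    show ?thesis
    proof (cases "pl \<and> passR st \<sigma>")
      case True
      define st1 where "st1 = st\<lparr>cnt := (cnt st)(idx st := Suc (cnt st (idx st)))\<rparr>"
      have e: "alg_step D C st \<sigma> = goto D C st1 (dep st) (idx st)"
        using LeafR True by (simp add: alg_step_def st1_def)
      have a: "Psi D C v gl (alg_step D C st \<sigma>) \<le> 3 * P + 2 + 2 * (Suc C - cnt st1 gl)"
        unfolding e P_def by (rule psi_goto)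
      have b: "2 * (Suc C - cnt st1 gl) \<le> W" unfolding W_def st1_def by auto
      have c: "good v (dep st) (idx st) \<Longrightarrow> 2 * (Suc C - cnt st1 gl) + 2 = W"
        using good_unique[OF _ g] dD cC unfolding W_def st1_def by auto
      show ?thesis unfolding ps using LeafR True a b c
        by (auto simp: off_def offR_def posted_price_def hR_def)
    next
      case False
      have e: "alg_step D C st \<sigma> = goto_parent D C st"
        using LeafR False by (auto simp: alg_step_def)
      show ?thesis unfolding e ps using LeafR False pp
        by (auto simp: off_def offR_def posted_price_def hR_def)
    qed
  next
    case MidQ
    have dD: "dep st < D" using inv MidQ by (auto simp: inv_def)
    define k' where "k' = (if \<sigma> then 2 * idx st + 1 else 2 * idx st)"
    have e: "alg_step D C st \<sigma> = goto D C st (Suc (dep st)) k'"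
      using MidQ by (simp add: alg_step_def k'_def)
    have k2: "k' div 2 = idx st" unfolding k'_def by simp
    have a: "Psi D C v gl (alg_step D C st \<sigma>) \<le> 3 * Phi D v (Suc (dep st)) k' + 2 + W"
      unfolding e W_def by (rule psi_goto)
    have b: "Phi D v (Suc (dep st)) k' \<le> P + 1"
      using Phi_child_le[OF dD, of v k'] k2 unfolding P_def by simp
    have c: "good v (dep st) (idx st) \<Longrightarrow> \<sigma> = (mid_pt (dep st) (idx st) \<le> v) \<Longrightarrow> Phi D v (Suc (dep st)) k' + 1 = P"
    proof -
      assume gd: "good v (dep st) (idx st)" and h: "\<sigma> = (mid_pt (dep st) (idx st) \<le> v)"
      have "good v (Suc (dep st)) k'"
        using good_child1[OF gd] good_child0[OF gd] h unfolding k'_def by auto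
      thus ?thesis using Phi_child_good[OF dD, of v k'] k2 unfolding P_def by simp
    qed
    show ?thesis unfolding ps using MidQ a b c
      by (auto simp: off_def posted_price_def)
  qed
  thus "Psi D C v gl (alg_step D C st \<sigma>) \<le> Psi D C v gl st + 10"
    and "\<sigma> = (posted_price st \<le> v) \<Longrightarrow> Psi D C v gl (alg_step D C st \<sigma>) + 1 \<le> Psi D C v gl st"
    by auto
qed

lemma extra_goto[simp]: "extra D' v (goto D C st d k) k' = 0"
  by (simp add: extra_def start_phase_def)

lemma extra_nl: "ph st \<noteq> LeafR True \<Longrightarrow> extra D v st k = 0"
  by (simp add: extra_def)

lemma cnt_step:
  assumes inv: "inv D C st" and v: "0 \<le> v" "v < 1" and g: "good v D gl" and k: "k \<noteq> gl"
    and h: "cnt st k + extra D v st k \<le> n"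
  shows "cnt (alg_step D C st \<sigma>) k + extra D v (alg_step D C st \<sigma>) k
         \<le> n + (if \<sigma> = (posted_price st \<le> v) then 0 else 1)"
proof (cases "ph st")
  case ChkL
  then show ?thesis using h by (auto simp: alg_step_def extra_def)
next
  case (ChkR pl)
  then show ?thesis using h by (auto simp: alg_step_def extra_nl goto_parent_def)
next
  case MidQ
  then show ?thesis using h by (auto simp: alg_step_def extra_nl)
next
  case Commit
  then show ?thesis using h by (auto simp: alg_step_def extra_def)
next
  case LeafL
  have dD: "dep st = D" using inv LeafL by (auto simp: inv_def)
  have e0: "extra D v st k = 0" using LeafL by (simp add: extra_def)
  have st': "alg_step D C st \<sigma> = st\<lparr>ph := LeafR (passL st \<sigma>)\<rparr>" using LeafL by (simp add: alg_step_def)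
  show ?thesis
  proof (cases "idx st = k \<and> passL st \<sigma> \<and> hR v st")
    case True
    have "\<not> good v (dep st) (idx st)" using True dD good_unique[OF _ g] k by auto
    hence "\<not> hL v st" using good_iff_h[OF v, of st] True by auto
    hence "\<sigma> \<noteq> (posted_price st \<le> v)" using True LeafL
      by (auto simp: hL_def passL_def posted_price_def)
    then show ?thesis using h e0 unfolding st' by (auto simp: extra_def hR_def passR_def)
  next
    case False
    then show ?thesis using h e0 unfolding st' by (auto simp: extra_def hR_def passR_def)
  qed
next
  case (LeafR pl)
  have dD: "dep st = D" using inv LeafR by (auto simp: inv_def)
  show ?thesis
  proof (cases "pl \<and> passR st \<sigma>")
    case True
    define st1 where "st1 = st\<lparr>cnt := (cnt st)(idx st := Suc (cnt st (idx st)))\<rparr>"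
    have e: "alg_step D C st \<sigma> = goto D C st1 (dep st) (idx st)"
      using LeafR True by (simp add: alg_step_def st1_def)
    show ?thesis
    proof (cases "idx st = k")
      case ik: True
      show ?thesis
      proof (cases "hR v st")
        case True
        hence "extra D v st k = 1" using ik dD LeafR \<open>pl \<and> passR st \<sigma>\<close> by (simp add: extra_def)
        then show ?thesis using h ik unfolding e st1_def by simp
      next
        case False
        hence "\<sigma> \<noteq> (posted_price st \<le> v)" using \<open>pl \<and> passR st \<sigma>\<close> LeafR
          by (auto simp: hR_def passR_def posted_price_def)
        then show ?thesis using h ik unfolding e st1_def by simp
      qed
    next
      case False
      then show ?thesis using h unfolding e st1_def by simp
    qed
  next
    case False
    have e: "alg_step D C st \<sigma> = goto_parent D C st"
      using LeafR False by (auto simp: alg_step_def)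
    show ?thesis using h unfolding e by (simp add: goto_parent_def)
  qed
qed

lemma run_fst_Suc: "fst (run T C adv (Suc t)) = alg_step (tree_depth T) C (fst (run T C adv t)) (observed T C adv t)"
  by (simp add: observed_def price_def Let_def split: prod.split)

lemma depth_bounds:
  assumes "1 \<le> T"
  shows "real T \<le> 2 ^ tree_depth T" "real (tree_depth T) \<le> log 2 (real T) + 1" "0 \<le> log 2 (real T)"
proof -
  have l0: "0 \<le> log 2 (real T)" using assms by simp
  have c: "real (tree_depth T) = of_int \<lceil>log 2 (real T)\<rceil>"
    unfolding tree_depth_def using l0 by simp
  have cc: "of_int \<lceil>log 2 (real T)\<rceil> - 1 < log 2 (real T) \<and> log 2 (real T) \<le> of_int \<lceil>log 2 (real T)\<rceil>"
    by (rule ceiling_correct)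
  show "real (tree_depth T) \<le> log 2 (real T) + 1" using c cc by linarith
  show "0 \<le> log 2 (real T)" by (rule l0)
  have "real T = 2 powr (log 2 (real T))" using assms by simp
  also have "\<dots> \<le> 2 powr (real (tree_depth T))" using c cc by (intro powr_mono) auto
  also have "\<dots> = 2 ^ tree_depth T" by (simp add: powr_realpow)
  finally show "real T \<le> 2 ^ tree_depth T" .
qed

lemma inv_init: "inv D C (init_state D C)"
  by (simp add: inv_def init_state_def start_phase_def)

lemma psi_init: "Psi D C v gl (init_state D C) = 3 * D + 2 * C + 4"
  by (simp add: Psi_def init_state_def Phi_def off_def start_phase_def)

lemma card_Suc_filter: "card {s. s < Suc t \<and> P s} = card {s. s < t \<and> P s} + (if P t then 1 else 0)"
proof -
  have "{s. s < Suc t \<and> P s} = {s. s < t \<and> P s} \<union> (if P t then {t} else {})"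
    by (auto simp: less_Suc_eq)
  thus ?thesis by (simp add: card_insert_if)
qed

lemma main_bound:
  assumes T: "1 \<le> T" and v: "0 \<le> v" "v < 1" and cr: "card (corrupted_rounds T C adv v) \<le> C"
  shows "regret T C adv v \<le> 13 * (real C + log 2 (real T) + 1)"
proof -
  define D where "D = tree_depth T"
  obtain gl where g: "good v D gl" using good_exists[OF v(1)] by blast
  define S where "S = (\<lambda>t. fst (run T C adv t))"
  define cor where "cor = (\<lambda>s. observed T C adv s \<noteq> (price T C adv s \<le> v))"
  define corr where "corr = (\<lambda>t. card {s. s < t \<and> cor s})"
  define Q where "Q = (\<lambda>t. real (Psi D C v gl (S t)))"
  have SS: "S (Suc t) = alg_step D C (S t) (observed T C adv t)" for t
    unfolding S_def D_def by (rule run_fst_Suc)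
  have pr: "price T C adv t = posted_price (S t)" for t unfolding S_def price_def by simp
  have I: "inv D C (S t)" for t
  proof (induction t)
    case 0 show ?case unfolding S_def D_def by (simp add: inv_init)
  next
    case (Suc t) show ?case unfolding SS by (rule inv_step[OF Suc])
  qed
  have J: "\<forall>k. k \<noteq> gl \<longrightarrow> cnt (S t) k + extra D v (S t) k \<le> corr t" for t
  proof (induction t)
    case 0 show ?case unfolding S_def D_def corr_def
      by (simp add: init_state_def extra_def start_phase_def)
  next
    case (Suc t)
    show ?case
    proof (intro allI impI)
      fix k assume k: "k \<noteq> gl"
      have "cnt (S (Suc t)) k + extra D v (S (Suc t)) k \<le> corr t + (if observed T C adv t = (posted_price (S t) \<le> v) then 0 else 1)"
        unfolding SS using Suc k by (intro cnt_step[OF I v g]) auto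
      also have "\<dots> = corr (Suc t)" unfolding corr_def card_Suc_filter cor_def pr by simp
      finally show "cnt (S (Suc t)) k + extra D v (S (Suc t)) k \<le> corr (Suc t)" .
    qed
  qed
  have fin: "finite (corrupted_rounds T C adv v)" unfolding corrupted_rounds_def by simp
  have K: "corr t \<le> C" if "t \<le> T" for t
  proof -
    have "{s. s < t \<and> cor s} \<subseteq> corrupted_rounds T C adv v"
      using that unfolding corrupted_rounds_def cor_def by auto
    hence "corr t \<le> card (corrupted_rounds T C adv v)" unfolding corr_def by (intro card_mono fin)
    thus ?thesis using cr by simp
  qed
  obtain DT: "real T \<le> 2 ^ D" "real D \<le> log 2 (real T) + 1" "0 \<le> log 2 (real T)"
    using depth_bounds[OF T] unfolding D_def by blast
  define r where "r = (\<lambda>t. v - price T C adv t * (if price T C adv t \<le> v then 1 else 0))"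
  have step: "r t \<le> 1 / real T + (Q t - Q (Suc t)) + 11 * (if cor t then 1 else 0)" if tT: "t < T" for t
  proof (cases "ph (S t) = Commit")
    case True
    have dD: "dep (S t) = D" and cc: "C < cnt (S t) (idx (S t))" using I[of t] True by (auto simp: inv_def)
    have "idx (S t) = gl"
    proof (rule ccontr)
      assume "idx (S t) \<noteq> gl"
      hence "cnt (S t) (idx (S t)) \<le> corr t" using J[of t] by auto
      thus False using K[of t] tT cc by linarith
    qed
    hence p: "price T C adv t = left_end D gl" unfolding pr posted_price_def using True dD by simp
    have q: "Q (Suc t) = Q t" unfolding Q_def SS using True by (simp add: alg_step_def)
    have "v < (real gl + 1) / 2 ^ D" using g unfolding good_def right_end_def by (simp add: add.commute)
    moreover have "(real gl + 1) / 2 ^ D = real gl / 2 ^ D + 1 / 2 ^ D" by (simp add: add_divide_distrib)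
    ultimately have "v - left_end D gl < 1 / 2 ^ D" unfolding left_end_def by linarith
    also have "\<dots> \<le> 1 / real T" using DT T by (intro divide_left_mono) auto
    finally have "r t \<le> 1 / real T" unfolding r_def p using g by (simp add: good_def)
    thus ?thesis using q by simp
  next
    case False
    have p0: "0 \<le> price T C adv t" unfolding pr posted_price_def
      by (simp add: left_end_def right_end_def mid_pt_def split: phase.split)
    have f1: "r t \<le> 1" unfolding r_def using p0 v by auto
    have f2: "Q (Suc t) \<le> Q t + 10"
    proof -
      have "Psi D C v gl (S (Suc t)) \<le> Psi D C v gl (S t) + 10"
        unfolding SS by (rule psi_step(1)[OF I v g False])
      hence "real (Psi D C v gl (S (Suc t))) \<le> real (Psi D C v gl (S t) + 10)" by (simp only: of_nat_le_iff)
      thus ?thesis unfolding Q_def by simp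
    qed
    have f3: "\<not> cor t \<Longrightarrow> Q (Suc t) + 1 \<le> Q t"
    proof -
      assume "\<not> cor t"
      hence "observed T C adv t = (posted_price (S t) \<le> v)" unfolding cor_def pr by simp
      hence "Psi D C v gl (S (Suc t)) + 1 \<le> Psi D C v gl (S t)"
        unfolding SS by (rule psi_step(2)[OF I v g False])
      hence "real (Psi D C v gl (S (Suc t)) + 1) \<le> real (Psi D C v gl (S t))" by (simp only: of_nat_le_iff)
      thus ?thesis unfolding Q_def by simp
    qed
    have f4: "0 \<le> 1 / real T" by simp
    show ?thesis
    proof (cases "cor t")
      case True
      then show ?thesis using f1 f2 f4 by (simp only: if_True; linarith)
    next
      case False
      then show ?thesis using f1 f3 f4 by (simp only: if_False; linarith)
    qed
  qed
  have reg: "regret T C adv v = (\<Sum>t<T. r t)"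
    unfolding regret_def r_def by (simp add: sum_subtractf)
  also have "\<dots> \<le> (\<Sum>t<T. 1 / real T + (Q t - Q (Suc t)) + 11 * (if cor t then 1 else 0))"
    by (intro sum_mono step) auto
  also have "\<dots> = 1 + (Q 0 - Q T) + 11 * (\<Sum>t<T. (if cor t then 1 else 0))"
    using T by (simp add: sum.distrib sum_lessThan_telescope' sum_distrib_left)
  also have "(\<Sum>t<T. (if cor t then 1 else 0)) = real (card (corrupted_rounds T C adv v))"
  proof -
    have "corrupted_rounds T C adv v = {t \<in> {..<T}. cor t}" unfolding corrupted_rounds_def cor_def by auto
    hence "real (card (corrupted_rounds T C adv v)) = (\<Sum>t\<in>{t \<in> {..<T}. cor t}. 1)" by simp
    also have "\<dots> = (\<Sum>t<T. (if cor t then 1 else 0))" by (subst sum.inter_filter) auto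
    finally show ?thesis by simp
  qed
  also have "Q 0 = real (3 * D + 2 * C + 4)" unfolding Q_def S_def D_def by (simp add: psi_init)
  finally have "regret T C adv v \<le> 1 + (real (3 * D + 2 * C + 4) - Q T) + 11 * real (card (corrupted_rounds T C adv v))" .
  moreover have "0 \<le> Q T" unfolding Q_def by simp
  moreover have "real (card (corrupted_rounds T C adv v)) \<le> real C" using cr by simp
  ultimately show ?thesis using DT by simp
qed

theorem theorem4p3:
  "\<exists>K::real. \<forall>(T::nat) (C::nat) (v::real) (adv::adversary).
     T \<ge> 1 \<longrightarrow> 0 \<le> v \<longrightarrow> v < 1 \<longrightarrow> card (corrupted_rounds T C adv v) \<le> C \<longrightarrow>
     regret T C adv v \<le> K * (real C + log 2 (real T) + 1)"
  by (rule exI[of _ 13]) (blast intro: main_bound)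

end
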